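(* Let $t$ be a positive integer and $\mathbf v$ a good vector with respect to $t$. The code $\mathcal C$ of Construction C built from $\mathbf v$ is an $(n,(t+1)n,2t+1,n)$-PIR array code over $\mathbb{F}_q$, where $n=4t+1$ if $\mathbf v$ has length $2t$ and $n=4t+2$ if $\mathbf v$ has length $2t+1$.
   Context: Fix a finite field $\mathbb{F}_q$. Good vector: for a positive integer $t$, a vector $\mathbf v=(v_1,\dots,v_{2t})\in[t]^{2t}$ or $\mathbf v\in\{0,\dots,t\}^{2t+1}$ is good w.r.t. $t$ if every $j\in[t]$ appears exactly twice in $\mathbf v$ and whenever $v_i=v_{i'}=j\in[t]$ with $i<i'$ then $i'-i=j$; for $j\in[t]$ let $j(\mathbf v)=\max\{i:v_i=j\}$. Construction C: let $n=4t+1$ if $|\mathbf v|=2t$ and $n=4t+2$ if $|\mathbf v|=2t+1$; all indices are taken modulo $n$ with representatives in $[n]$. For $\mathbf x=(x_1,\dots,x_n)\in\mathbb{F}_q^n$, $i\in[n]$, $j\in[t]$, put $y_{i,j}=x_{i-t-j(\mathbf v)}+x_{i-t-j(\mathbf v)+j}$, and define $\mathcal C(\mathbf x)=(\mathbf c_1,\dots,\mathbf c_n)$ with $\mathbf c_i=(x_i,y_{i,1},\dots,y_{i,t})$. An $(n,N,k,m)$-PIR array code over $\mathbb{F}_q$ is an $\mathbb{F}_q$-linear map $\mathbf x\mapsto(\mathbf c_1,\dots,\mathbf c_m)$ with buckets $\mathbf c_\ell\in\mathbb{F}_q^{N_\ell}$, $N_\ell\ge1$, $\sum_\ell N_\ell=N$,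 such that for each $i\in[n]$ there is a partition of $[m]$ into $k$ sets $R_1,\dots,R_k$ such that for each $j$, $x_i$ is an $\mathbb{F}_q$-linear combination of values $f_\ell(\mathbf c_\ell)$, $\ell\in R_j$, for some linear functionals $f_\ell$ (independent of $\mathbf x$). *)

theory Defs
  imports Main
begin

text \<open>Vectors are 1-indexed. A good vector is a list v (v_i = v!(i-1)).\<close>

definition good_vector :: "nat \<Rightarrow> nat list \<Rightarrow> bool" where
  "good_vector t v \<longleftrightarrow>
     ((length v = 2*t \<and> set v \<subseteq> {1..t}) \<or> (length v = 2*t+1 \<and> set v \<subseteq> {0..t})) \<and>
     (\<forall>j\<in>{1..t}. card {i\<in>{1..length v}. v!(i-1) = j} = 2) \<and>
     (\<forall>i i' j. j \<in> {1..t} \<longrightarrow> 1 \<le> i \<longrightarrow> i < i' \<longrightarrow> i' \<le> length v \<longrightarrow>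
        v!(i-1) = j \<longrightarrow> v!(i'-1) = j \<longrightarrow> i' - i = j)"

definition jpos :: "nat list \<Rightarrow> nat \<Rightarrow> nat" where
  "jpos v j = Max {i\<in>{1..length v}. v!(i-1) = j}"

definition cn :: "nat \<Rightarrow> nat list \<Rightarrow> nat" where
  "cn t v = (if length v = 2*t then 4*t+1 else 4*t+2)"

definition modn :: "nat \<Rightarrow> int \<Rightarrow> nat" where
  "modn n k = nat ((k - 1) mod int n) + 1"

text \<open>Construction C: entry r (1 \<le> r \<le> t+1) of bucket c_l;
  r = 1 gives x_l, r = j+1 gives y_{l,j}.\<close>
definition constrC :: "nat \<Rightarrow> nat list \<Rightarrow> (nat \<Rightarrow> 'a::field) \<Rightarrow> nat \<Rightarrow> nat \<Rightarrow> 'a" where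
  "constrC t v x l r =
     (if r = 1 then x l
      else (let j = r - 1; n = cn t v; a = int l - int t - int (jpos v j)
            in x (modn n a) + x (modn n (a + int j))))"

text \<open>(n,N,k,m)-PIR array code: enc x l r is entry r (1 \<le> r \<le> Nb l) of bucket l
  (1 \<le> l \<le> m) of the codeword of x = (x_1,...,x_n). enc must be an F-linear
  map of (x_1,...,x_n); linear functionals f_l on F^{Nb l} are
  c \<mapsto> \<Sum>r. phi l r * c_r.\<close>
definition is_PIR_array_code ::
  "nat \<Rightarrow> nat \<Rightarrow> nat \<Rightarrow> nat \<Rightarrow> (nat \<Rightarrow> nat) \<Rightarrow> ((nat \<Rightarrow> 'a::field) \<Rightarrow> nat \<Rightarrow> nat \<Rightarrow> 'a) \<Rightarrow> bool" where
  "is_PIR_array_code n N k m Nb enc \<longleftrightarrow>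
     (\<forall>x y. (\<forall>s\<in>{1..n}. x s = y s) \<longrightarrow>
        (\<forall>l\<in>{1..m}. \<forall>r\<in>{1..Nb l}. enc x l r = enc y l r)) \<and>
     (\<forall>x y a b. \<forall>l\<in>{1..m}. \<forall>r\<in>{1..Nb l}.
        enc (\<lambda>s. a * x s + b * y s) l r = a * enc x l r + b * enc y l r) \<and>
     (\<forall>l\<in>{1..m}. Nb l \<ge> 1) \<and>
     (\<Sum>l=1..m. Nb l) = N \<and>
     (\<forall>i\<in>{1..n}. \<exists>R :: nat \<Rightarrow> nat set.
        (\<forall>j\<in>{1..k}. R j \<noteq> {}) \<and>
        (\<Union>j\<in>{1..k}. R j) = {1..m} \<and>
        (\<forall>j1\<in>{1..k}. \<forall>j2\<in>{1..k}. j1 \<noteq> j2 \<longrightarrow> R j1 \<inter> R j2 = {}) \<and>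
        (\<forall>j\<in>{1..k}. \<exists>(phi :: nat \<Rightarrow> nat \<Rightarrow> 'a) (mu :: nat \<Rightarrow> 'a). \<forall>x.
            x i = (\<Sum>l\<in>R j. mu l * (\<Sum>r=1..Nb l. phi l r * enc x l r))))"

end

theory Submission imports Defs begin

lemma modn_range: "n > 0 \<Longrightarrow> modn n a \<in> {1..n}"
proof -
  assume n: "n > 0"
  have "(a-1) mod int n < int n" "0 \<le> (a-1) mod int n" using n by simp_all
  then show ?thesis unfolding modn_def by (simp add: nat_less_iff Suc_le_eq)
qed

lemma modn_id: "l \<in> {1..n} \<Longrightarrow> modn n (int l) = l"
  unfolding modn_def by auto

lemma modn_int: "n > 0 \<Longrightarrow> int (modn n a) = a - int n * ((a - 1) div int n)"
proof -
  assume n: "n > 0"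
  have "0 \<le> (a-1) mod int n" using n by simp
  then have "int (modn n a) = (a-1) mod int n + 1" unfolding modn_def by simp
  also have "\<dots> = a - int n * ((a - 1) div int n)"
    by (simp add: minus_div_mult_eq_mod[symmetric] algebra_simps)
  finally show ?thesis .
qed

lemma modn_per: "modn n (a + int n * k) = modn n a"
  unfolding modn_def by (metis add_diff_eq diff_add_eq mod_mult_self2 mult.commute)

lemma modn_inj: "n > 0 \<Longrightarrow> modn n a = modn n b \<Longrightarrow> \<bar>a - b\<bar> < int n \<Longrightarrow> a = b"
proof -
  assume n: "n > 0" and e: "modn n a = modn n b" and d: "\<bar>a - b\<bar> < int n"
  have "(a - 1) mod int n = (b - 1) mod int n"
    using e n unfolding modn_def by (simp add: eq_nat_nat_iff)
  then have "int n dvd (a - b)"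
    by (metis mod_eq_dvd_iff diff_diff_cancel diff_diff_eq2)
  then obtain k where k: "a - b = int n * k" by (auto elim: dvdE)
  show "a = b"
  proof (rule ccontr)
    assume "a \<noteq> b"
    then have "k \<noteq> 0" using k by auto
    then have "\<bar>int n * k\<bar> \<ge> int n" using n by (simp add: abs_mult)
    then show False using d k by simp
  qed
qed

lemma jpos_props:
  assumes g: "good_vector t v" and j: "j \<in> {1..t}"
  shows "1 \<le> jpos v j \<and> jpos v j \<le> length v \<and> v!(jpos v j - 1) = j \<and> j < jpos v j
         \<and> v!(jpos v j - j - 1) = j"
proof -
  define S where "S = {i\<in>{1..length v}. v!(i-1) = j}"
  have c: "card S = 2" using g j unfolding good_vector_def S_def by blast
  have fin: "finite S" unfolding S_def by simp
  have ne: "S \<noteq> {}" using c by auto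
  define p where "p = Max S"
  have pS: "p \<in> S" using fin ne p_def by simp
  have "jpos v j = p" unfolding jpos_def p_def S_def by simp
  have "card (S - {p}) = 1" using c pS fin by simp
  then obtain i0 where "S - {p} = {i0}" using card_1_singletonE by blast
  then have i0: "i0 \<in> S" "i0 \<noteq> p" by auto
  have "i0 \<le> p" using fin i0 p_def by simp
  then have "i0 < p" using i0 by simp
  have "p - i0 = j" using g j i0 pS \<open>i0 < p\<close> unfolding good_vector_def S_def by auto
  then show ?thesis using pS i0 \<open>jpos v j = p\<close> \<open>i0 < p\<close> unfolding S_def
    by (auto simp: diff_diff_add)
qed

lemma enc_shift:
  assumes n: "cn t v > 0" and jj: "jj \<ge> 1"
  shows "constrC t v x (modn (cn t v) (c + int t + int (jpos v jj))) (jj+1)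
         = x (modn (cn t v) c) + x (modn (cn t v) (c + int jj))"
proof -
  let ?n = "cn t v"
  define q where "q = (c + int t + int (jpos v jj) - 1) div int ?n"
  have e: "int (modn ?n (c + int t + int (jpos v jj))) = c + int t + int (jpos v jj) - int ?n * q"
    using modn_int[OF n] q_def by simp
  have 1: "int (modn ?n (c + int t + int (jpos v jj))) - int t - int (jpos v jj) = c + int ?n * (-q)"
    using e by simp
  have 2: "modn ?n (c + int ?n * (-q) + int jj) = modn ?n (c + int jj)"
    using modn_per[of ?n "c + int jj" "-q"] by (simp add: algebra_simps)
  have 3: "jj + 1 - 1 = jj" "jj + 1 \<noteq> 1" using jj by auto
  show ?thesis unfolding constrC_def Let_def 3 if_False 1 2 modn_per using jj by simp
qed

lemma sum_pick:
  fixes r0 :: nat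
  assumes "r0 \<in> {1..t+1}"
  shows "(\<Sum>r=1..t+1. (if r = r0 then 1 else 0) * f r) = (f r0 :: 'a::field)"
proof -
  have "(\<Sum>r=1..t+1. (if r = r0 then 1 else 0) * f r) = (\<Sum>r=1..t+1. (if r = r0 then f r else 0))"
    by (rule sum.cong) auto
  also have "\<dots> = f r0" using assms by (subst sum.delta) auto
  finally show ?thesis .
qed

lemma enc1: "constrC t v x l 1 = x l" unfolding constrC_def by simp

lemma rec2:
  fixes x :: "nat \<Rightarrow> 'a::field"
  assumes ne: "l1 \<noteq> l2" and r0: "r0 \<in> {1..t+1}"
    and h: "constrC t v x l2 r0 = x i + x l1"
  shows "x i = (\<Sum>l\<in>{l1,l2}. (if l = l2 then 1 else -1) *
             (\<Sum>r=1..t+1. (if l = l2 then (if r = r0 then 1 else 0) else (if r = 1 then 1 else 0))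
                 * constrC t v x l r))"
proof -
  have a: "(\<Sum>r=1..t+1. (if l2 = l2 then (if r = r0 then 1 else 0) else (if r = 1 then 1 else 0))
                 * constrC t v x l2 r) = constrC t v x l2 r0"
    using sum_pick[OF r0, of "\<lambda>r. constrC t v x l2 r"] by simp
  have "(1::nat) \<in> {1..t+1}" by simp
  from sum_pick[OF this, of "\<lambda>r. constrC t v x l1 r"]
  have b: "(\<Sum>r=1..t+1. (if l1 = l2 then (if r = r0 then 1 else 0) else (if r = 1 then 1 else 0))
                 * constrC t v x l1 r) = x l1"
    using ne by (simp add: constrC_def)
  show ?thesis using ne a b h by simp
qed

lemma X:
  fixes P :: "nat \<Rightarrow> nat" and f :: "nat \<Rightarrow> int"
  assumes PC: "\<And>j j'. j \<in> {1..t} \<Longrightarrow> j' \<in> {1..t} \<Longrightarrow> P j = P j' \<longleftrightarrow> j = j'"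
  and PD: "\<And>j j'. j \<in> {1..t} \<Longrightarrow> j' \<in> {1..t} \<Longrightarrow> P j - j = P j' - j' \<longleftrightarrow> j = j'"
  and PCD: "\<And>j j'. j \<in> {1..t} \<Longrightarrow> j' \<in> {1..t} \<Longrightarrow> P j \<noteq> P j' - j'"
  and Pb: "\<And>j. j \<in> {1..t} \<Longrightarrow> j < P j"
  and oa: "(a = 0 \<and> f a = 0) \<or> (1 \<le> a \<and> a \<le> t \<and> f a = int a) \<or>
          (t < a \<and> a \<le> 2*t \<and> f a = - int (a - t)) \<or>
          (\<exists>j\<in>{1..t}. a = 2*t + j \<and> f a = int t + int (P j)) \<or>
          (\<exists>j\<in>{1..t}. a = 3*t + j \<and> f a = int t + int (P j) - int j)"
  and ob: "(b = 0 \<and> f b = 0) \<or> (1 \<le> b \<and> b \<le> t \<and> f b = int b) \<or>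
          (t < b \<and> b \<le> 2*t \<and> f b = - int (b - t)) \<or>
          (\<exists>j\<in>{1..t}. b = 2*t + j \<and> f b = int t + int (P j)) \<or>
          (\<exists>j\<in>{1..t}. b = 3*t + j \<and> f b = int t + int (P j) - int j)"
  and e: "f a = f b"
  shows "a = b"
proof -
  have wb: "(b = 0 \<and> f b = 0) \<or> (1 \<le> b \<and> b \<le> t \<and> f b = int b) \<or>
          (t < b \<and> b \<le> 2*t \<and> f b = - int (b - t)) \<or> f b > int t"
    using ob
  proof (elim disjE bexE conjE)
    fix j assume "j \<in> {1..t}" "b = 2*t+j" "f b = int t + int (P j)"
    then show ?thesis using Pb[of j] by auto
  next
    fix j assume "j \<in> {1..t}" "b = 3*t+j" "f b = int t + int (P j) - int j"
    then show ?thesis using Pb[of j] by auto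
  qed auto
  have simple: "a = b" if a: "a = 0 \<and> f a = 0 \<or> (1 \<le> a \<and> a \<le> t \<and> f a = int a) \<or> (t < a \<and> a \<le> 2*t \<and> f a = - int (a - t))"
    using a wb e by (elim disjE conjE) linarith+
  show ?thesis
  using oa
proof (elim disjE bexE conjE)
  fix j assume j: "j \<in> {1..t}" and a: "a = 2*t+j" "f a = int t + int (P j)"
  have pj: "j < P j" using Pb[OF j] .
  from ob show ?thesis
  proof (elim disjE bexE conjE)
    fix j' assume j': "j' \<in> {1..t}" "b = 2*t+j'" "f b = int t + int (P j')"
    then have "P j = P j'" using a e by simp
    then show ?thesis using PC[OF j j'(1)] a j' by simp
  next
    fix j' assume j': "j' \<in> {1..t}" "b = 3*t+j'" "f b = int t + int (P j') - int j'"
    have "j' < P j'" using Pb[OF j'(1)] .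
    then have "P j = P j' - j'" using a e j' by linarith
    then show ?thesis using PCD[OF j j'(1)] by simp
  qed (use a pj e in auto)
next
  fix j assume j: "j \<in> {1..t}" and a: "a = 3*t+j" "f a = int t + int (P j) - int j"
  have pj: "j < P j" using Pb[OF j] .
  from ob show ?thesis
  proof (elim disjE bexE conjE)
    fix j' assume j': "j' \<in> {1..t}" "b = 2*t+j'" "f b = int t + int (P j')"
    then have "P j' = P j - j" using a e pj by linarith
    then show ?thesis using PCD[OF j'(1) j] by simp
  next
    fix j' assume j': "j' \<in> {1..t}" "b = 3*t+j'" "f b = int t + int (P j') - int j'"
    have "j' < P j'" using Pb[OF j'(1)] .
    then have "P j - j = P j' - j'" using a e j' pj by linarith
    then show ?thesis using PD[OF j j'(1)] a j' by simp
  qed (use a pj e in auto)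
next
  assume "a = 0" "f a = 0" then show ?thesis using simple by blast
next
  assume "1 \<le> a" "a \<le> t" "f a = int a" then show ?thesis using simple by blast
next
  assume "t < a" "a \<le> 2*t" "f a = - int (a - t)" then show ?thesis using simple by blast
qed
qed

theorem lemma4p6:
  fixes t :: nat and v :: "nat list"
  assumes "t > 0" and "good_vector t v"
  shows "is_PIR_array_code (cn t v) ((t+1) * cn t v) (2*t+1) (cn t v) (\<lambda>_. t+1)
           (constrC t v :: (nat \<Rightarrow> 'a::{finite,field}) \<Rightarrow> nat \<Rightarrow> nat \<Rightarrow> 'a)"
proof -
  note tpos = assms(1) and g = assms(2)
  define n where "n = cn t v"
  define L where "L = length v"
  have Lc: "L = 2*t \<or> L = 2*t+1" using g unfolding good_vector_def L_def by auto
  have nL: "n = 2*t + L + 1" using Lc tpos unfolding n_def cn_def L_def by auto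
  have n0: "n > 0" using nL by simp
  have P: "\<And>j. j \<in> {1..t} \<Longrightarrow> 1 \<le> jpos v j \<and> jpos v j \<le> L \<and> v!(jpos v j - 1) = j \<and> j < jpos v j
         \<and> v!(jpos v j - j - 1) = j"
    using jpos_props[OF g] unfolding L_def by blast
  have PC: "\<And>j j'. j \<in> {1..t} \<Longrightarrow> j' \<in> {1..t} \<Longrightarrow> jpos v j = jpos v j' \<longleftrightarrow> j = j'"
    using P by metis
  have PD: "\<And>j j'. j \<in> {1..t} \<Longrightarrow> j' \<in> {1..t} \<Longrightarrow> jpos v j - j = jpos v j' - j' \<longleftrightarrow> j = j'"
    using P by metis
  have PCD: "\<And>j j'. j \<in> {1..t} \<Longrightarrow> j' \<in> {1..t} \<Longrightarrow> jpos v j \<noteq> jpos v j' - j'"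
  proof
    fix j j' assume j: "j \<in> {1..t}" and j': "j' \<in> {1..t}" and e: "jpos v j = jpos v j' - j'"
    have "j = j'" using P[OF j] P[OF j'] e by (metis diff_diff_left)
    then show False using e P[OF j] j by auto
  qed
  have Pb: "\<And>j. j \<in> {1..t} \<Longrightarrow> j < jpos v j" "\<And>j. j \<in> {1..t} \<Longrightarrow> jpos v j \<le> L"
    using P by auto
  show ?thesis
    unfolding is_PIR_array_code_def n_def[symmetric]
  proof (intro conjI)
    show "\<forall>(x::nat \<Rightarrow> 'a) y. (\<forall>s\<in>{1..n}. x s = y s) \<longrightarrow>
        (\<forall>l\<in>{1..n}. \<forall>r\<in>{1..t+1}. constrC t v x l r = constrC t v y l r)"
      using modn_range[OF n0] unfolding constrC_def Let_def n_def[symmetric] by auto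
    show "\<forall>(x::nat \<Rightarrow> 'a) y a b. \<forall>l\<in>{1..n}. \<forall>r\<in>{1..t+1}.
        constrC t v (\<lambda>s. a * x s + b * y s) l r = a * constrC t v x l r + b * constrC t v y l r"
      unfolding constrC_def Let_def by (simp add: algebra_simps)
    show "\<forall>l\<in>{1..n}. 1 \<le> t + 1" by simp
    show "(\<Sum>l = 1..n. t + 1) = (t + 1) * n" by simp
    show "\<forall>i\<in>{1..n}. \<exists>R. (\<forall>j\<in>{1..2*t+1}. R j \<noteq> {}) \<and>
        (\<Union>j\<in>{1..2*t+1}. R j) = {1..n} \<and>
        (\<forall>j1\<in>{1..2*t+1}. \<forall>j2\<in>{1..2*t+1}. j1 \<noteq> j2 \<longrightarrow> R j1 \<inter> R j2 = {}) \<and>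
        (\<forall>j\<in>{1..2*t+1}. \<exists>(phi :: nat \<Rightarrow> nat \<Rightarrow> 'a) (mu :: nat \<Rightarrow> 'a). \<forall>x.
            x i = (\<Sum>l\<in>R j. mu l * (\<Sum>r=1..t+1. phi l r * constrC t v x l r)))"
    proof
      fix i assume i: "i \<in> {1..n}"
      define off where "off lab = (if lab = 0 then 0 else if lab \<le> t then int lab
          else if lab \<le> 2*t then - int (lab - t)
          else if lab \<le> 3*t then int t + int (jpos v (lab - 2*t))
          else int t + int (jpos v (lab - 3*t)) - int (lab - 3*t))" for lab
      have oc: "(lab = 0 \<and> off lab = 0) \<or> (1 \<le> lab \<and> lab \<le> t \<and> off lab = int lab) \<or>
          (t < lab \<and> lab \<le> 2*t \<and> off lab = - int (lab - t)) \<or>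
          (\<exists>j\<in>{1..t}. lab = 2*t + j \<and> off lab = int t + int (jpos v j)) \<or>
          (\<exists>j\<in>{1..t}. lab = 3*t + j \<and> off lab = int t + int (jpos v j) - int j)"
        if labr: "lab \<in> {0..4*t}" for lab
      proof -
        consider "lab = 0" | "1 \<le> lab \<and> lab \<le> t" | "t < lab \<and> lab \<le> 2*t" | "2*t < lab \<and> lab \<le> 3*t"
          | "3*t < lab \<and> lab \<le> 4*t" using labr
          by (cases "lab = 0"; cases "lab \<le> t"; cases "lab \<le> 2*t"; cases "lab \<le> 3*t"; auto)
        then show ?thesis
        proof cases
          case 4
          then show ?thesis unfolding off_def by (intro disjI2 disjI2 disjI2 disjI1 bexI[of _ "lab - 2*t"]) auto
        next
          case 5
          then show ?thesis unfolding off_def by (intro disjI2 disjI2 disjI2 disjI2 bexI[of _ "lab - 3*t"]) auto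
        qed (auto simp: off_def)
      qed
      have offb: "- int t \<le> off lab \<and> off lab \<le> int t + int L" if "lab \<in> {0..4*t}" for lab
        using oc[OF that]
      proof (elim disjE bexE conjE)
        fix j assume "j \<in> {1..t}" "lab = 2*t+j" "off lab = int t + int (jpos v j)"
        then show ?thesis using Pb(1)[of j] Pb(2)[of j] by simp
      next
        fix j assume "j \<in> {1..t}" "lab = 3*t+j" "off lab = int t + int (jpos v j) - int j"
        then show ?thesis using Pb(1)[of j] Pb(2)[of j] by simp
      qed auto
      have offinj: "a = b" if a: "a \<in> {0..4*t}" and b: "b \<in> {0..4*t}" and e: "off a = off b" for a b
        by (rule X[where P="jpos v" and f=off, OF PC PD PCD Pb(1) oc[OF a] oc[OF b] e])
      define bb where "bb lab = modn n (int i + off lab)" for lab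
      have bbinj: "inj_on bb {0..4*t}"
      proof (rule inj_onI)
        fix a b assume a: "a \<in> {0..4*t}" and b: "b \<in> {0..4*t}" and e: "bb a = bb b"
        have "\<bar>(int i + off a) - (int i + off b)\<bar> < int n"
        proof -
          have "int n = 2*int t + int L + 1" using nL by simp
          then show ?thesis unfolding abs_less_iff using offb[OF a] offb[OF b] by linarith
        qed
        then have "int i + off a = int i + off b" using modn_inj[OF n0] e unfolding bb_def by blast
        then show "a = b" using offinj[OF a b] by simp
      qed
      have bbr: "bb lab \<in> {1..n}" for lab using modn_range[OF n0] unfolding bb_def by blast
      have bb0: "bb 0 = i" unfolding bb_def off_def using modn_id[OF i] by simp
      define R where "R j = (if j = 1 then {1..n} - (\<Union>j'\<in>{2..2*t+1}. {bb (j'-1), bb (2*t+j'-1)})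
                              else {bb (j-1), bb (2*t+j-1)})" for j
      have iR: "i \<in> R 1"
      proof -
        have "i \<noteq> bb lab" if "lab \<in> {1..4*t}" for lab
          using inj_onD[OF bbinj, of 0 lab] bb0 that by auto
        note nb = this
        have "i \<notin> {bb (j'-1), bb (2*t+j'-1)}" if "j' \<in> {2..2*t+1}" for j'
        proof -
          have m: "j'-1 \<in> {1..4*t}" "2*t+j'-1 \<in> {1..4*t}" using that by auto
          show ?thesis using nb[OF m(1)] nb[OF m(2)] by blast
        qed
        then show ?thesis unfolding R_def using i by simp
      qed
      show "\<exists>R. (\<forall>j\<in>{1..2*t+1}. R j \<noteq> {}) \<and>
        (\<Union>j\<in>{1..2*t+1}. R j) = {1..n} \<and>
        (\<forall>j1\<in>{1..2*t+1}. \<forall>j2\<in>{1..2*t+1}. j1 \<noteq> j2 \<longrightarrow> R j1 \<inter> R j2 = {}) \<and>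
        (\<forall>j\<in>{1..2*t+1}. \<exists>(phi :: nat \<Rightarrow> nat \<Rightarrow> 'a) (mu :: nat \<Rightarrow> 'a). \<forall>x.
            x i = (\<Sum>l\<in>R j. mu l * (\<Sum>r=1..t+1. phi l r * constrC t v x l r)))"
      proof (intro exI[of _ R] conjI)
        show "\<forall>j\<in>{1..2*t+1}. R j \<noteq> {}" using iR unfolding R_def by auto
        show "(\<Union>j\<in>{1..2*t+1}. R j) = {1..n}"
        proof
          show "(\<Union>j\<in>{1..2*t+1}. R j) \<subseteq> {1..n}" using bbr unfolding R_def by auto
          show "{1..n} \<subseteq> (\<Union>j\<in>{1..2*t+1}. R j)"
          proof
            fix l assume l: "l \<in> {1..n}"
            show "l \<in> (\<Union>j\<in>{1..2*t+1}. R j)"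
            proof (cases "l \<in> (\<Union>j'\<in>{2..2*t+1}. {bb (j'-1), bb (2*t+j'-1)})")
              case True
              then obtain j' where j': "j' \<in> {2..2*t+1}" "l \<in> {bb (j'-1), bb (2*t+j'-1)}" by blast
              then have "l \<in> R j'" unfolding R_def by auto
              then show ?thesis using j' by auto
            next
              case False
              then have "l \<in> R 1" using l unfolding R_def by auto
              then show ?thesis by auto
            qed
          qed
        qed
        show "\<forall>j1\<in>{1..2*t+1}. \<forall>j2\<in>{1..2*t+1}. j1 \<noteq> j2 \<longrightarrow> R j1 \<inter> R j2 = {}"
        proof (intro ballI impI)
          fix j1 j2 assume j1: "j1 \<in> {1..2*t+1}" and j2: "j2 \<in> {1..2*t+1}" and ne: "j1 \<noteq> j2"
          show "R j1 \<inter> R j2 = {}"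
          proof (cases "j1 = 1 \<or> j2 = 1")
            case True
            have sub: "R j \<subseteq> (\<Union>j'\<in>{2..2*t+1}. {bb (j'-1), bb (2*t+j'-1)})" if "j \<in> {2..2*t+1}" for j
            proof -
              have "j \<noteq> 1" using that by simp
              then have "R j = {bb (j-1), bb (2*t+j-1)}" unfolding R_def by simp
              then show ?thesis using that by blast
            qed
            have R1: "R 1 = {1..n} - (\<Union>j'\<in>{2..2*t+1}. {bb (j'-1), bb (2*t+j'-1)})"
              unfolding R_def by simp
            show ?thesis
            proof (cases "j1 = 1")
              case c: True
              then have "j2 \<in> {2..2*t+1}" using j2 ne by auto
              then show ?thesis using sub[of j2] R1 c by blast
            next
              case c: False
              then have "j2 = 1" "j1 \<in> {2..2*t+1}" using True j1 by auto
              then show ?thesis using sub[of j1] R1 by blast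
            qed
          next
            case False
            have m: "j1 - 1 \<in> {0..4*t}" "2*t+j1-1 \<in> {0..4*t}" "j2 - 1 \<in> {0..4*t}" "2*t+j2-1 \<in> {0..4*t}"
              using j1 j2 by auto
            have d: "j1 - 1 \<noteq> j2 - 1" "j1 - 1 \<noteq> 2*t+j2-1" "2*t+j1-1 \<noteq> j2 - 1" "2*t+j1-1 \<noteq> 2*t+j2-1"
              using False ne j1 j2 by auto
            have "bb (j1 - 1) \<noteq> bb (j2 - 1)" "bb (j1 - 1) \<noteq> bb (2*t+j2-1)"
                 "bb (2*t+j1-1) \<noteq> bb (j2 - 1)" "bb (2*t+j1-1) \<noteq> bb (2*t+j2-1)"
              using d inj_on_eq_iff[OF bbinj m(1) m(3)] inj_on_eq_iff[OF bbinj m(1) m(4)]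
                inj_on_eq_iff[OF bbinj m(2) m(3)] inj_on_eq_iff[OF bbinj m(2) m(4)] by auto
            moreover have "R j1 = {bb (j1-1), bb (2*t+j1-1)}" "R j2 = {bb (j2-1), bb (2*t+j2-1)}"
              using False unfolding R_def by simp_all
            ultimately show ?thesis by auto
          qed
        qed
        show "\<forall>j\<in>{1..2*t+1}. \<exists>(phi :: nat \<Rightarrow> nat \<Rightarrow> 'a) (mu :: nat \<Rightarrow> 'a). \<forall>x.
            x i = (\<Sum>l\<in>R j. mu l * (\<Sum>r=1..t+1. phi l r * constrC t v x l r))"
        proof
          fix j assume j: "j \<in> {1..2*t+1}"
          have r1: "(1::nat) \<in> {1..t+1}" by simp
          consider "j = 1" | "2 \<le> j \<and> j \<le> t+1" | "t+2 \<le> j \<and> j \<le> 2*t+1" using j by force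
          then show "\<exists>(phi :: nat \<Rightarrow> nat \<Rightarrow> 'a) (mu :: nat \<Rightarrow> 'a). \<forall>x.
            x i = (\<Sum>l\<in>R j. mu l * (\<Sum>r=1..t+1. phi l r * constrC t v x l r))"
          proof cases
            case 1
            show ?thesis
            proof (intro exI allI)
              fix x :: "nat \<Rightarrow> 'a"
              have inner: "(\<Sum>r=1..t+1. (if r = 1 then 1 else 0) * constrC t v x l r) = x l" for l
                using sum_pick[OF r1, of "\<lambda>r. constrC t v x l r"] enc1[of t v x l] by simp
              have fin: "finite (R 1)" unfolding R_def by simp
              have "(\<Sum>l\<in>R j. (if l = i then 1 else 0) * (\<Sum>r=1..t+1. (if r = 1 then 1 else 0) * constrC t v x l r))
                  = (\<Sum>l\<in>R 1. (if l = i then x l else 0))"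
                unfolding inner 1 by (rule sum.cong) auto
              also have "\<dots> = x i" using fin iR by (subst sum.delta) auto
              finally show "x i = (\<Sum>l\<in>R j. (if l = i then 1 else 0) * (\<Sum>r=1..t+1. (if r = 1 then 1 else 0) * constrC t v x l r))"
                by simp
            qed
          next
            case 2
            define jj where "jj = j - 1"
            have jj: "jj \<in> {1..t}" using 2 jj_def by auto
            have Rj: "R j = {bb jj, bb (2*t+jj)}" using 2 unfolding R_def jj_def by auto
            have ne: "bb jj \<noteq> bb (2*t+jj)" using inj_on_eq_iff[OF bbinj, of jj "2*t+jj"] jj by auto
            have o1: "off jj = int jj" using jj unfolding off_def by auto
            have o2: "off (2*t+jj) = int t + int (jpos v jj)" using jj unfolding off_def by auto
            have r0: "jj + 1 \<in> {1..t+1}" using jj by auto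
            have key: "constrC t v x (bb (2*t+jj)) (jj+1) = x i + x (bb jj)" for x :: "nat \<Rightarrow> 'a"
            proof -
              have "constrC t v x (bb (2*t+jj)) (jj+1) = x (modn n (int i)) + x (modn n (int i + int jj))"
                using enc_shift[of t v jj x "int i"] n0 jj unfolding bb_def o2 n_def by (simp add: add.assoc)
              then show ?thesis unfolding bb_def o1 modn_id[OF i] .
            qed
            show ?thesis unfolding Rj
            proof (intro exI[of _ "\<lambda>l r. if l = bb (2*t+jj) then (if r = jj+1 then 1 else 0) else (if r = 1 then 1 else 0)"]
                exI[of _ "\<lambda>l. if l = bb (2*t+jj) then 1 else -1"] allI)
              fix x :: "nat \<Rightarrow> 'a"
              show "x i = (\<Sum>l\<in>{bb jj, bb (2*t+jj)}. (if l = bb (2*t+jj) then 1 else -1) *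
                (\<Sum>r=1..t+1. (if l = bb (2*t+jj) then (if r = jj+1 then 1 else 0) else (if r = 1 then 1 else 0))
                 * constrC t v x l r))"
                by (rule rec2[OF ne r0 key])
            qed
          next
            case 3
            define jj where "jj = j - t - 1"
            have jj: "jj \<in> {1..t}" using 3 jj_def by auto
            have Rj: "R j = {bb (t+jj), bb (3*t+jj)}" using 3 unfolding R_def jj_def
              by (auto simp: algebra_simps)
            have ne: "bb (t+jj) \<noteq> bb (3*t+jj)" using inj_on_eq_iff[OF bbinj, of "t+jj" "3*t+jj"] jj by auto
            have o1: "off (t+jj) = - int jj" using jj unfolding off_def by auto
            have o2: "off (3*t+jj) = int t + int (jpos v jj) - int jj" using jj unfolding off_def by auto
            have r0: "jj + 1 \<in> {1..t+1}" using jj by auto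
            have key: "constrC t v x (bb (3*t+jj)) (jj+1) = x i + x (bb (t+jj))" for x :: "nat \<Rightarrow> 'a"
            proof -
              have e: "int i + off (3*t+jj) = (int i - int jj) + int t + int (jpos v jj)" using o2 by simp
              have "constrC t v x (bb (3*t+jj)) (jj+1) = x (modn n (int i - int jj)) + x (modn n (int i - int jj + int jj))"
                using enc_shift[of t v jj x "int i - int jj"] n0 jj unfolding bb_def e n_def by simp
              then show ?thesis unfolding bb_def o1 using modn_id[OF i] by (simp add: add.commute)
            qed
            show ?thesis unfolding Rj
            proof (intro exI[of _ "\<lambda>l r. if l = bb (3*t+jj) then (if r = jj+1 then 1 else 0) else (if r = 1 then 1 else 0)"]
                exI[of _ "\<lambda>l. if l = bb (3*t+jj) then 1 else -1"] allI)
              fix x :: "nat \<Rightarrow> 'a"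
              show "x i = (\<Sum>l\<in>{bb (t+jj), bb (3*t+jj)}. (if l = bb (3*t+jj) then 1 else -1) *
                (\<Sum>r=1..t+1. (if l = bb (3*t+jj) then (if r = jj+1 then 1 else 0) else (if r = 1 then 1 else 0))
                 * constrC t v x l r))"
                by (rule rec2[OF ne r0 key])
            qed
          qed
        qed
      qed
    qed
  qed
qed

end
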